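(* Let $\mathfrak{g}$ be a finite-dimensional real pre-Lie algebra. The equation \[ (\mathrm{MC}_\phi)_x(x,y)=0 \qquad \text{for all } x,y\in\mathfrak{g} \] admits a solution $\phi\in\Omega^1(\mathfrak{g};\mathfrak{g})$ which is pointwise an isomorphism at the origin (and hence on some open neighborhood of the origin). Moreover, if one additionally imposes the boundary condition \[ \phi_x(x)=x \qquad \text{for all } x\in\mathfrak{g}, \] then the solution of the two equations is unique and is given by \[ \phi_x(y)=\int_0^1 e^{-t\,\mathrm{ad}_x}\,y\,dt,\qquad x\in\mathfrak{g},\ y\in T_x\mathfrak{g}\cong\mathfrak{g}. \]
   Context: A pre-Lie algebra is a vector space $\mathfrak{g}$ with an antisymmetric bilinear map $[\cdot,\cdot]:\mathfrak{g}\times\mathfrak{g}\to\mathfrak{g}$ (no Jacobi identity assumed); $\mathrm{ad}_x(y)=[x,y]$. Tangent spaces of $\mathfrak{g}$ are identified with $\mathfrak{g}$. $\Omega^*(\mathfrak{g};\mathfrak{g})$ denotes $\mathfrak{g}$-valued differential forms on $\mathfrak{g}$, with de Rham differential $d$ and bracket $[\omega,\eta](X_1,\dots,X_{p+q})=\sum_{\sigma\in S_{p,q}}\mathrm{sgn}(\sigma)[\omega(X_{\sigma(1)},\dots,X_{\sigma(p)}),\eta(X_{\sigma(p+1)},\dots,X_{\sigma(p+q)})]$ for $\omega$ a $p$-form and $\eta$ a $q$-form, $S_{p,q}$ the $(p,q)$-shuffles. For $\phi\in\Omega^1(\mathfrak{g};\mathfrak{g})$ the Maurer–Cartan 2-form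 is $\mathrm{MC}_\phi=d\phi+\tfrac12[\phi,\phi]$. *)

theory Defs
  imports "HOL-Analysis.Analysis"
begin

text \<open>A finite-dimensional real pre-Lie algebra: a finite-dimensional real vector space
  (type class euclidean_space) with an antisymmetric bilinear bracket (no Jacobi identity).\<close>
definition pre_lie :: "('a::euclidean_space \<Rightarrow> 'a \<Rightarrow> 'a) \<Rightarrow> bool" where
  "pre_lie br \<longleftrightarrow> bilinear br \<and> (\<forall>x y. br x y = - br y x)"

fun iter_deriv :: "('a::real_normed_vector \<Rightarrow> 'b::real_normed_vector) \<Rightarrow> 'a list \<Rightarrow> 'a \<Rightarrow> 'b" where
  "iter_deriv f [] = f"
| "iter_deriv f (v # vs) = (\<lambda>x. frechet_derivative (iter_deriv f vs) (at x) v)"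

definition smooth_map :: "('a::real_normed_vector \<Rightarrow> 'b::real_normed_vector) \<Rightarrow> bool" where
  "smooth_map f \<longleftrightarrow> (\<forall>vs x. iter_deriv f vs differentiable (at x))"

text \<open>A g-valued 1-form on g: phi x is the (linear) value at the point x, acting on tangent
  vectors T_x g = g; smooth in x.\<close>
definition one_form :: "('a::euclidean_space \<Rightarrow> 'a \<Rightarrow> 'a) \<Rightarrow> bool" where
  "one_form \<phi> \<longleftrightarrow> (\<forall>x. linear (\<phi> x)) \<and> (\<forall>y. smooth_map (\<lambda>x. \<phi> x y))"

text \<open>de Rham differential of a 1-form (evaluated on constant vector fields X, Y).\<close>
definition d_form :: "('a::euclidean_space \<Rightarrow> 'a \<Rightarrow> 'a) \<Rightarrow> 'a \<Rightarrow> 'a \<Rightarrow> 'a \<Rightarrow> 'a" where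
  "d_form \<phi> x X Y = frechet_derivative (\<lambda>z. \<phi> z Y) (at x) X - frechet_derivative (\<lambda>z. \<phi> z X) (at x) Y"

definition form_bracket :: "('a \<Rightarrow> 'a \<Rightarrow> 'a) \<Rightarrow> ('a \<Rightarrow> 'a \<Rightarrow> 'a) \<Rightarrow> ('a \<Rightarrow> 'a \<Rightarrow> 'a)
    \<Rightarrow> 'a \<Rightarrow> 'a \<Rightarrow> 'a \<Rightarrow> 'a::euclidean_space" where
  "form_bracket br \<omega> \<eta> x X Y = br (\<omega> x X) (\<eta> x Y) - br (\<omega> x Y) (\<eta> x X)"

definition MC :: "('a \<Rightarrow> 'a \<Rightarrow> 'a) \<Rightarrow> ('a \<Rightarrow> 'a \<Rightarrow> 'a) \<Rightarrow> 'a \<Rightarrow> 'a \<Rightarrow> 'a \<Rightarrow> 'a::euclidean_space" where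
  "MC br \<phi> x X Y = d_form \<phi> x X Y + (1/2) *\<^sub>R form_bracket br \<phi> \<phi> x X Y"

definition exp_neg_ad :: "('a \<Rightarrow> 'a \<Rightarrow> 'a) \<Rightarrow> real \<Rightarrow> 'a \<Rightarrow> 'a \<Rightarrow> 'a::euclidean_space" where
  "exp_neg_ad br t x y = (\<Sum>n. ((- t) ^ n / fact n) *\<^sub>R ((br x) ^^ n) y)"

definition phi0 :: "('a \<Rightarrow> 'a \<Rightarrow> 'a) \<Rightarrow> 'a \<Rightarrow> 'a \<Rightarrow> 'a::euclidean_space" where
  "phi0 br x y = integral {0..1} (\<lambda>t. exp_neg_ad br t x y)"

end

theory Submission
  imports Defs
begin


definition mlin :: "nat \<Rightarrow> ('a::real_normed_vector list \<Rightarrow> 'b::real_normed_vector) \<Rightarrow> bool" where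
  "mlin n T \<longleftrightarrow> (\<forall>xs i. length xs = n \<longrightarrow> i < n \<longrightarrow> linear (\<lambda>z. T (xs[i:=z])))"

lemma mlin_zero:
  assumes "mlin n T" "length xs = n" "i < n" "xs!i = 0"
  shows "T xs = 0"
proof -
  have "linear (\<lambda>z. T (xs[i:=z]))" using assms unfolding mlin_def by blast
  then have "T (xs[i:=0]) = 0" by (rule linear_0)
  moreover have "xs[i:=0] = xs" using assms by (metis list_update_id)
  ultimately show ?thesis by simp
qed

lemma mlin_diff:
  assumes "mlin n T" "length xs = n" "i < n"
  shows "T (xs[i:=a]) - T (xs[i:=b]) = T (xs[i := a - b])"
proof -
  have "linear (\<lambda>z. T (xs[i:=z]))" using assms unfolding mlin_def by blast
  from linear_diff[OF this, of a b] show ?thesis by simp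
qed

lemma mlin_telescope:
  assumes "mlin n T" "length as = n" "length bs = n"
  shows "T bs - T as = (\<Sum>i<n. T ((take i bs @ drop i as)[i := bs!i - as!i]))"
proof -
  define M where "M i = take i bs @ drop i as" for i
  have step: "T (M (Suc i)) - T (M i) = T ((M i)[i := bs!i - as!i])" if "i < n" for i
  proof -
    have len: "length (M i) = n" using that assms by (simp add: M_def)
    have e1: "M (Suc i) = (M i)[i := bs!i]"
      using that assms by (simp add: M_def take_Suc_conv_app_nth Cons_nth_drop_Suc[symmetric] list_update_append)
    have e2: "M i = (M i)[i := as!i]"
      using that assms by (simp add: M_def Cons_nth_drop_Suc[symmetric] list_update_append)
    have "T (M (Suc i)) - T (M i) = T ((M i)[i := bs!i]) - T ((M i)[i := as!i])"
      using e1 e2 by metis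
    also have "\<dots> = T ((M i)[i := bs!i - as!i])" by (rule mlin_diff[OF assms(1) len that])
    finally show ?thesis .
  qed
  have "T bs - T as = T (M n) - T (M 0)" using assms by (simp add: M_def)
  also have "\<dots> = (\<Sum>i<n. T (M (Suc i)) - T (M i))" by (rule sum_lessThan_telescope[symmetric])
  also have "\<dots> = (\<Sum>i<n. T ((M i)[i := bs!i - as!i]))" by (rule sum.cong) (simp_all add: step)
  finally show ?thesis by (simp add: M_def)
qed

lemma prod_norm_bound1:
  fixes l :: "'a::real_normed_vector list"
  assumes "j < length l" "\<forall>k<length l. k \<noteq> j \<longrightarrow> norm (l!k) \<le> R" "1 \<le> R"
  shows "prod_list (map norm l) \<le> R ^ length l * norm (l!j)"
proof -
  let ?n = "length l"
  have "prod_list (map norm l) = (\<Prod>k\<in>{0..<?n}. norm (l!k))"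
    by (simp add: prod.list_conv_set_nth)
  also have "\<dots> = norm (l!j) * (\<Prod>k\<in>{0..<?n}-{j}. norm (l!k))"
    using assms by (subst prod.remove[of _ j]) auto
  also have "\<dots> \<le> norm (l!j) * (\<Prod>k\<in>{0..<?n}-{j}. R)"
    using assms by (intro mult_left_mono prod_mono) auto
  also have "\<dots> = norm (l!j) * R ^ (?n - 1)" using assms by simp
  also have "\<dots> \<le> norm (l!j) * R ^ ?n" using assms by (intro mult_left_mono power_increasing) auto
  finally show ?thesis by (simp add: mult.commute)
qed

lemma prod_norm_bound2:
  fixes l :: "'a::real_normed_vector list"
  assumes "i < length l" "j < length l" "i \<noteq> j"
    "\<forall>k<length l. k \<noteq> i \<longrightarrow> k \<noteq> j \<longrightarrow> norm (l!k) \<le> R" "1 \<le> R"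
  shows "prod_list (map norm l) \<le> R ^ length l * norm (l!i) * norm (l!j)"
proof -
  let ?n = "length l"
  have e1: "prod_list (map norm l) = (\<Prod>k\<in>{0..<?n}. norm (l!k))"
    by (simp add: prod.list_conv_set_nth)
  have e2: "(\<Prod>k\<in>{0..<?n}. norm (l!k)) = norm (l!i) * (\<Prod>k\<in>{0..<?n}-{i}. norm (l!k))"
    using assms by (subst prod.remove[of _ i]) auto
  have e3: "(\<Prod>k\<in>{0..<?n}-{i}. norm (l!k)) = norm (l!j) * (\<Prod>k\<in>{0..<?n}-{i}-{j}. norm (l!k))"
    using assms by (subst prod.remove[of _ j]) auto
  have b1: "(\<Prod>k\<in>{0..<?n}-{i}-{j}. norm (l!k)) \<le> (\<Prod>k\<in>{0..<?n}-{i}-{j}. R)"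
    using assms by (intro prod_mono) auto
  have e4: "(\<Prod>k\<in>{0..<?n}-{i}-{j}. R) = R ^ (?n - 2)" using assms by (simp add: numeral_2_eq_2)
  have b2: "R ^ (?n - 2) \<le> R ^ ?n" using assms by (intro power_increasing) auto
  have "(\<Prod>k\<in>{0..<?n}-{i}-{j}. norm (l!k)) \<le> R ^ ?n" using b1 e4 b2 by linarith
  then have "norm (l!i) * (norm (l!j) * (\<Prod>k\<in>{0..<?n}-{i}-{j}. norm (l!k))) \<le> norm (l!i) * (norm (l!j) * R ^ ?n)"
    by (intro mult_left_mono) auto
  then have "prod_list (map norm l) \<le> norm (l!i) * (norm (l!j) * R ^ ?n)"
    by (simp only: e1 e2 e3)
  also have "\<dots> = R ^ ?n * norm (l!i) * norm (l!j)" by (simp only: ac_simps)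
  finally show ?thesis .
qed

lemma sum_bound_helper:
  fixes f :: "nat \<Rightarrow> 'b::banach"
  assumes le: "\<And>n. norm (f n) \<le> g n" and sg: "summable g"
  shows "summable f" "norm (suminf f) \<le> suminf g"
proof -
  show "summable f" by (rule summable_comparison_test'[OF sg]) (rule le)
  have sn: "summable (\<lambda>n. norm (f n))" by (rule summable_comparison_test'[OF sg]) (simp add: le)
  have "norm (suminf f) \<le> (\<Sum>n. norm (f n))" by (rule summable_norm[OF sn])
  also have "\<dots> \<le> suminf g" by (rule suminf_le[OF le sn sg])
  finally show "norm (suminf f) \<le> suminf g" .
qed

definition ser :: "(nat \<Rightarrow> 'a::real_normed_vector list \<Rightarrow> 'b::banach) \<Rightarrow> (nat \<Rightarrow> real) \<Rightarrow> bool" where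
  "ser T K \<longleftrightarrow> (\<forall>n. mlin n (T n)) \<and>
     (\<forall>n xs. length xs = n \<longrightarrow> norm (T n xs) \<le> K n * prod_list (map norm xs))
      \<and> (\<forall>n. 0 \<le> K n) \<and> (\<forall>r\<ge>0. summable (\<lambda>n. K n * r^n))"

definition sfun :: "(nat \<Rightarrow> 'a list \<Rightarrow> 'b) \<Rightarrow> 'a \<Rightarrow> 'b::real_normed_vector" where
  "sfun T x = (\<Sum>n. T n (replicate n x))"

definition dser :: "(nat \<Rightarrow> 'a list \<Rightarrow> 'b) \<Rightarrow> 'a \<Rightarrow> 'a \<Rightarrow> 'b::real_normed_vector" where
  "dser T x h = (\<Sum>n. \<Sum>i<n. T n ((replicate n x)[i:=h]))"

lemma real_le_two_pow: "real n \<le> 2 ^ n"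
  using of_nat_less_two_power[of n, where 'a=real] by linarith

lemma real_sq_le_four_pow: "real n * real n \<le> 4 ^ n"
proof -
  have "real n * real n \<le> 2^n * 2^n" by (intro mult_mono real_le_two_pow) auto
  also have "(2::real)^n * 2^n = 4 ^ n" by (simp add: power_mult_distrib[symmetric])
  finally show ?thesis .
qed

lemma ser_props:
  assumes "ser T K"
  shows "mlin n (T n)" "length xs = n \<Longrightarrow> norm (T n xs) \<le> K n * prod_list (map norm xs)"
    "0 \<le> K n" "r \<ge> 0 \<Longrightarrow> summable (\<lambda>n. K n * r^n)"
  using assms unfolding ser_def by auto

lemma ser_summable_nn:
  assumes "ser T K" "r \<ge> 0"
  shows "summable (\<lambda>n. real n * real n * K n * r^n)" "summable (\<lambda>n. real n * K n * r^n)"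
proof -
  have s4: "summable (\<lambda>n. K n * (4*r)^n)" by (rule ser_props(4)[OF assms(1)]) (use assms(2) in simp)
  have K0: "0 \<le> K n" for n using assms unfolding ser_def by auto
  show "summable (\<lambda>n. real n * real n * K n * r^n)"
  proof (rule summable_comparison_test'[OF s4, of 0])
    fix n :: nat
    have rn: "0 \<le> r^n" using assms by simp
    have nn: "0 \<le> real n * real n * K n * r^n" using K0[of n] rn by simp
    have "real n * real n * K n * r^n \<le> 4^n * K n * r^n"
      by (rule mult_right_mono[OF mult_right_mono[OF real_sq_le_four_pow K0] rn])
    also have "4^n * K n * r^n = K n * (4*r)^n" by (simp add: power_mult_distrib mult.commute mult.left_commute)
    finally show "norm (real n * real n * K n * r^n) \<le> K n * (4*r)^n"
      using nn by simp
  qed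
  have s2: "summable (\<lambda>n. K n * (2*r)^n)" by (rule ser_props(4)[OF assms(1)]) (use assms(2) in simp)
  show "summable (\<lambda>n. real n * K n * r^n)"
  proof (rule summable_comparison_test'[OF s2, of 0])
    fix n :: nat
    have rn: "0 \<le> r^n" using assms by simp
    have nn: "0 \<le> real n * K n * r^n" using K0[of n] rn by simp
    have "real n * K n * r^n \<le> 2^n * K n * r^n"
      by (rule mult_right_mono[OF mult_right_mono[OF real_le_two_pow K0] rn])
    also have "2^n * K n * r^n = K n * (2*r)^n" by (simp add: power_mult_distrib mult.commute mult.left_commute)
    finally show "norm (real n * K n * r^n) \<le> K n * (2*r)^n"
      using nn by simp
  qed
qed

lemma mlin_upd_add:
  assumes "mlin n T" "length xs = n" "i < n"
  shows "T (xs[i:=a+b]) = T (xs[i:=a]) + T (xs[i:=b])"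
proof -
  have "linear (\<lambda>z. T (xs[i:=z]))" using assms unfolding mlin_def by blast
  from linear_add[OF this, of a b] show ?thesis by simp
qed

lemma mlin_upd_scale:
  assumes "mlin n T" "length xs = n" "i < n"
  shows "T (xs[i:=c *\<^sub>R a]) = c *\<^sub>R T (xs[i:=a])"
proof -
  have "linear (\<lambda>z. T (xs[i:=z]))" using assms unfolding mlin_def by blast
  from linear_scale[OF this, of c a] show ?thesis by simp
qed

lemma ser_term_bound:
  assumes "ser T K"
  shows "norm (T n (replicate n x)) \<le> K n * norm x ^ n"
  using ser_props(2)[OF assms, of "replicate n x" n] by simp

lemma ser_summable:
  assumes "ser T K" shows "summable (\<lambda>n. T n (replicate n x))"
  by (rule sum_bound_helper(1)[OF ser_term_bound[OF assms]]) (rule ser_props(4)[OF assms], simp)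

lemma ser_upd_bound:
  assumes "ser T K" "i < n" "norm x \<le> R" "1 \<le> R"
  shows "norm (T n ((replicate n x)[i:=h])) \<le> K n * R^n * norm h"
proof -
  let ?l = "(replicate n x)[i:=h]"
  have "norm (T n ?l) \<le> K n * prod_list (map norm ?l)" by (rule ser_props(2)[OF assms(1)]) simp
  also have "prod_list (map norm ?l) \<le> R ^ n * norm h"
    using prod_norm_bound1[of i ?l R] assms by (simp add: nth_list_update)
  then have "K n * prod_list (map norm ?l) \<le> K n * (R ^ n * norm h)"
    by (intro mult_left_mono ser_props(3)[OF assms(1)])
  finally show ?thesis by (simp add: mult.assoc)
qed

lemma ser_dsum_bound:
  assumes "ser T K" "norm x \<le> R" "1 \<le> R"
  shows "norm (\<Sum>i<n. T n ((replicate n x)[i:=h])) \<le> real n * K n * R^n * norm h"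
proof -
  have "norm (\<Sum>i<n. T n ((replicate n x)[i:=h])) \<le> (\<Sum>i<n. K n * R^n * norm h)"
    by (rule sum_norm_le) (use ser_upd_bound[OF assms(1) _ assms(2,3)] in auto)
  also have "\<dots> = real n * K n * R^n * norm h" by simp
  finally show ?thesis .
qed

lemma dser_summable:
  assumes "ser T K"
  shows "summable (\<lambda>n. \<Sum>i<n. T n ((replicate n x)[i:=h]))"
proof (rule sum_bound_helper(1))
  show "norm (\<Sum>i<n. T n ((replicate n x)[i:=h])) \<le> real n * K n * (norm x + 1)^n * norm h" for n
    by (rule ser_dsum_bound[OF assms]) auto
  show "summable (\<lambda>n. real n * K n * (norm x + 1)^n * norm h)"
    by (rule summable_mult2) (rule ser_summable_nn(2)[OF assms], simp)
qed

lemma nth_repl_upd: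
  assumes "i < n" "k < n"
  shows "((replicate i a @ replicate (n-i) b)[i:=h])!k = (if k = i then h else if k < i then a else b)"
  using assms by (auto simp: nth_list_update nth_append)

lemma nth_take_drop_mix:
  assumes "length as = n" "length bs = n" "j < n" "k < n"
  shows "(take j bs @ drop j as)!k = (if k < j then bs!k else as!k)"
  using assms by (auto simp: nth_append min_def)

lemma ser_err_bound:
  assumes "ser T K" "norm x + 1 \<le> R" "norm h \<le> 1"
  shows "norm (T n (replicate n (x+h)) - T n (replicate n x) - (\<Sum>i<n. T n ((replicate n x)[i:=h])))
          \<le> real n * real n * K n * R^n * (norm h)^2"
proof -
  have ml: "mlin n (T n)" by (rule ser_props(1)[OF assms(1)])
  have K0: "0 \<le> K n" by (rule ser_props(3)[OF assms(1)])
  have R1: "1 \<le> R" using assms(2) norm_ge_zero[of x] by linarith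
  have nxh: "norm (x+h) \<le> R" using assms(2,3) norm_triangle_ineq[of x h] by linarith
  have nx: "norm x \<le> R" using assms(2) by linarith
  define A where "A i = (replicate i (x+h) @ replicate (n-i) x)[i:=h]" for i
  define B where "B i = (replicate n x)[i:=h]" for i
  have lenA: "length (A i) = n" if "i < n" for i using that by (simp add: A_def)
  have lenB: "length (B i) = n" for i by (simp add: B_def)
  have nA: "A i ! k = (if k = i then h else if k < i then x+h else x)" if "i < n" "k < n" for i k
    unfolding A_def by (rule nth_repl_upd[OF that])
  have nB: "B i ! k = (if k = i then h else x)" if "k < n" for i k
    using that by (simp add: B_def nth_list_update)
  have tel1: "T n (replicate n (x+h)) - T n (replicate n x) = (\<Sum>i<n. T n (A i))"
  proof -
    have "T n (replicate n (x+h)) - T n (replicate n x) =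
      (\<Sum>i<n. T n ((take i (replicate n (x+h)) @ drop i (replicate n x))[i := replicate n (x+h)!i - replicate n x!i]))"
      by (rule mlin_telescope[OF ml]) simp_all
    also have "\<dots> = (\<Sum>i<n. T n (A i))" by (rule sum.cong) (auto simp: A_def)
    finally show ?thesis .
  qed
  have trm: "norm (T n (A i) - T n (B i)) \<le> real n * (K n * R^n * (norm h)^2)" if i: "i < n" for i
  proof -
    have "T n (A i) - T n (B i) = (\<Sum>j<n. T n ((take j (A i) @ drop j (B i))[j := A i!j - B i!j]))"
      by (rule mlin_telescope[OF ml lenB lenA[OF i]])
    also have "norm \<dots> \<le> (\<Sum>j<n. K n * R^n * (norm h)^2)"
    proof (rule sum_norm_le)
      fix j assume "j \<in> {..<n}"
      then have j: "j < n" by simp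
      define C where "C = (take j (A i) @ drop j (B i))[j := A i!j - B i!j]"
      have lenC: "length C = n" using lenA[OF i] lenB j by (simp add: C_def)
      have nC: "C ! k = (if k = j then A i!j - B i!j else if k < j then A i!k else B i!k)" if "k < n" for k
        using that j nth_take_drop_mix[OF lenB lenA[OF i] j that] lenA[OF i] lenB
        by (simp add: C_def nth_list_update)
      show "norm (T n C) \<le> K n * R^n * (norm h)^2"
      proof (cases "j = i")
        case True
        have "C ! j = 0" using nC[OF j] True nA[OF i j] nB[OF j] by simp
        then have "T n C = 0" by (rule mlin_zero[OF ml lenC j])
        then show ?thesis using K0 R1 by simp
      next
        case False
        have ci: "C ! i = h" using nC[OF i] nA[OF i i] nB[OF i] False by auto
        have cj: "norm (C ! j) \<le> norm h" using nC[OF j] nA[OF i j] nB[OF j] False by auto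
        have ck: "\<forall>k<length C. k \<noteq> i \<longrightarrow> k \<noteq> j \<longrightarrow> norm (C!k) \<le> R"
          using nC nA[OF i] nB nxh nx lenC by auto
        have "prod_list (map norm C) \<le> R ^ length C * norm (C!i) * norm (C!j)"
          by (rule prod_norm_bound2) (use lenC i j False ck R1 in auto)
        also have "\<dots> \<le> R ^ n * norm h * norm h"
          using ci cj lenC R1 by (simp add: mult_left_mono)
        finally have "prod_list (map norm C) \<le> R ^ n * norm h * norm h" .
        then have "K n * prod_list (map norm C) \<le> K n * (R ^ n * norm h * norm h)"
          by (rule mult_left_mono[OF _ K0])
        moreover have "norm (T n C) \<le> K n * prod_list (map norm C)"
          using ser_props(2)[OF assms(1) lenC] .
        ultimately show ?thesis by (simp add: power2_eq_square mult.assoc)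
      qed
    qed
    also have "\<dots> = real n * (K n * R^n * (norm h)^2)" by simp
    finally show ?thesis .
  qed
  have "T n (replicate n (x+h)) - T n (replicate n x) - (\<Sum>i<n. T n ((replicate n x)[i:=h]))
        = (\<Sum>i<n. T n (A i) - T n (B i))"
    using tel1 by (simp add: B_def sum_subtractf)
  also have "norm \<dots> \<le> (\<Sum>i<n. real n * (K n * R^n * (norm h)^2))"
    by (rule sum_norm_le) (use trm in auto)
  also have "\<dots> = real n * real n * K n * R^n * (norm h)^2" by simp
  finally show ?thesis .
qed

lemma dser_linear_props:
  assumes "ser T K"
  shows "dser T x (a + b) = dser T x a + dser T x b" "dser T x (c *\<^sub>R a) = c *\<^sub>R dser T x a"
proof -
  have ml: "\<And>n. mlin n (T n)" using ser_props(1)[OF assms] .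
  have e: "(\<Sum>i<n. T n ((replicate n x)[i:=a+b])) =
      (\<Sum>i<n. T n ((replicate n x)[i:=a])) + (\<Sum>i<n. T n ((replicate n x)[i:=b]))" for n
    by (subst sum.distrib[symmetric], rule sum.cong, simp, simp add: mlin_upd_add[OF ml])
  have "dser T x (a+b) = (\<Sum>n. (\<Sum>i<n. T n ((replicate n x)[i:=a])) + (\<Sum>i<n. T n ((replicate n x)[i:=b])))"
    unfolding dser_def e ..
  also have "\<dots> = dser T x a + dser T x b"
    unfolding dser_def by (rule suminf_add[OF dser_summable[OF assms] dser_summable[OF assms], symmetric])
  finally show "dser T x (a + b) = dser T x a + dser T x b" .
  have e2: "(\<Sum>i<n. T n ((replicate n x)[i:=c *\<^sub>R a])) = c *\<^sub>R (\<Sum>i<n. T n ((replicate n x)[i:=a]))" for n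
    by (subst scaleR_sum_right, rule sum.cong, simp, simp add: mlin_upd_scale[OF ml])
  have "dser T x (c *\<^sub>R a) = (\<Sum>n. c *\<^sub>R (\<Sum>i<n. T n ((replicate n x)[i:=a])))"
    unfolding dser_def e2 ..
  also have "\<dots> = c *\<^sub>R dser T x a"
    unfolding dser_def by (rule suminf_scaleR_right[OF dser_summable[OF assms], symmetric])
  finally show "dser T x (c *\<^sub>R a) = c *\<^sub>R dser T x a" .
qed

lemma ser_has_derivative:
  assumes "ser T K"
  shows "(sfun T has_derivative dser T x) (at x)"
proof -
  define R where "R = norm x + 1"
  have R0: "0 \<le> R" by (simp add: R_def)
  define M where "M = (\<Sum>n. real n * K n * R^n)"
  have sM: "summable (\<lambda>n. real n * K n * R^n)" by (rule ser_summable_nn(2)[OF assms R0])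
  define C where "C = (\<Sum>n. real n * real n * K n * R^n)"
  have sC: "summable (\<lambda>n. real n * real n * K n * R^n)" by (rule ser_summable_nn(1)[OF assms R0])
  have C0: "0 \<le> C" unfolding C_def by (rule suminf_nonneg[OF sC]) (simp add: ser_props(3)[OF assms] R0)
  have bl: "bounded_linear (dser T x)"
  proof (rule bounded_linear_intro[where K=M])
    show "dser T x (a + b) = dser T x a + dser T x b" for a b by (rule dser_linear_props(1)[OF assms])
    show "dser T x (c *\<^sub>R a) = c *\<^sub>R dser T x a" for c a by (rule dser_linear_props(2)[OF assms])
    fix h
    have "norm (dser T x h) \<le> (\<Sum>n. real n * K n * R^n * norm h)"
      unfolding dser_def
      by (rule sum_bound_helper(2)) (rule ser_dsum_bound[OF assms], simp add: R_def, simp add: R_def, rule summable_mult2[OF sM])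
    also have "\<dots> = M * norm h" unfolding M_def by (rule suminf_mult2[OF sM, symmetric])
    finally show "norm (dser T x h) \<le> norm h * M" by (simp add: mult.commute)
  qed
  have est: "norm (sfun T (x+h) - sfun T x - dser T x h) \<le> C * (norm h)^2" if h: "norm h \<le> 1" for h
  proof -
    have "sfun T (x+h) - sfun T x - dser T x h = (\<Sum>n. T n (replicate n (x+h)) - T n (replicate n x) - (\<Sum>i<n. T n ((replicate n x)[i:=h])))"
      unfolding sfun_def dser_def
      by (simp only: suminf_diff[OF ser_summable[OF assms] ser_summable[OF assms]]
            suminf_diff[OF summable_diff[OF ser_summable[OF assms] ser_summable[OF assms]] dser_summable[OF assms]])
    also have "norm \<dots> \<le> (\<Sum>n. real n * real n * K n * R^n * (norm h)^2)"
      by (rule sum_bound_helper(2)) (rule ser_err_bound[OF assms], simp add: R_def, rule h, rule summable_mult2[OF sC])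
    also have "\<dots> = C * (norm h)^2" unfolding C_def by (rule suminf_mult2[OF sC, symmetric])
    finally show ?thesis .
  qed
  show ?thesis unfolding has_derivative_at_alt
  proof (intro conjI allI impI bl)
    fix e :: real assume e: "0 < e"
    have Cp: "0 < C + 1" using C0 by linarith
    show "\<exists>d>0. \<forall>y. norm (y - x) < d \<longrightarrow> norm (sfun T y - sfun T x - dser T x (y - x)) \<le> e * norm (y - x)"
    proof (intro exI[of _ "min 1 (e/(C+1))"] conjI allI impI)
      show "0 < min 1 (e/(C+1))" using e Cp by simp
      fix y assume y: "norm (y - x) < min 1 (e/(C+1))"
      define h where "h = y - x"
      have h1: "norm h \<le> 1" using y by (simp add: h_def)
      have "norm h < e/(C+1)" using y by (simp add: h_def)
      then have he: "norm h * (C+1) < e" using Cp by (simp add: pos_less_divide_eq)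
      have "C * norm h \<le> norm h * (C+1)" by (simp add: distrib_left mult.commute)
      with he have Ce: "C * norm h \<le> e" by linarith
      have "norm (sfun T y - sfun T x - dser T x (y-x)) \<le> C * (norm h)^2" using est[OF h1] by (simp add: h_def)
      also have "C*(norm h)^2 = (C*norm h)*norm h" by (simp add: power2_eq_square)
      also have "\<dots> \<le> e * norm h" by (rule mult_right_mono[OF Ce]) simp
      finally show "norm (sfun T y - sfun T x - dser T x (y - x)) \<le> e * norm (y - x)" by (simp add: h_def)
    qed
  qed
qed

definition dT :: "(nat \<Rightarrow> 'a list \<Rightarrow> 'b) \<Rightarrow> 'a \<Rightarrow> nat \<Rightarrow> 'a list \<Rightarrow> 'b::real_normed_vector" where
  "dT T v m xs = (\<Sum>i<Suc m. T (Suc m) (take i xs @ v # drop i xs))"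

lemma ins_upd:
  assumes "i \<le> length xs" "k < length xs"
  shows "take i (xs[k:=z]) @ v # drop i (xs[k:=z]) = (take i xs @ v # drop i xs)[(if k < i then k else Suc k) := z]"
  using assms by (intro nth_equalityI) (auto simp: nth_append nth_list_update nth_Cons' min_def)

lemma ins_repl:
  assumes "i \<le> m"
  shows "(replicate (Suc m) x)[i:=v] = take i (replicate m x) @ v # drop i (replicate m x)"
proof -
  have e: "replicate (Suc m) x = replicate i x @ x # replicate (m - i) x"
  proof -
    have "replicate i x @ x # replicate (m - i) x = replicate i x @ replicate (Suc (m - i)) x" by simp
    also have "\<dots> = replicate (i + Suc (m - i)) x" by (simp only: replicate_add)
    also have "i + Suc (m - i) = Suc m" using assms by simp
    finally show ?thesis by simp
  qed
  show ?thesis using assms by (simp only: e) (simp add: list_update_append min_def)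
qed

lemma prod_ins:
  "prod_list (map norm (take i xs @ v # drop i xs)) = norm v * prod_list (map norm xs)"
proof -
  have "prod_list (map norm (take i xs)) * prod_list (map norm (drop i xs)) = prod_list (map norm xs)"
    by (metis append_take_drop_id map_append prod_list.append)
  then show ?thesis by (simp add: mult_ac)
qed

lemma dT_ser:
  assumes "ser T K"
  shows "ser (dT T v) (\<lambda>m. real (Suc m) * K (Suc m) * norm v)"
  unfolding ser_def
proof (intro conjI allI impI)
  have ml: "\<And>n. mlin n (T n)" using ser_props(1)[OF assms] .
  show "mlin m (dT T v m)" for m
    unfolding mlin_def
  proof (intro allI impI)
    fix xs :: "'a list" and k assume len: "length xs = m" and k: "k < m"
    have eq: "(\<lambda>z. dT T v m (xs[k:=z])) =
      (\<lambda>z. \<Sum>i<Suc m. T (Suc m) ((take i xs @ v # drop i xs)[(if k < i then k else Suc k) := z]))"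
      unfolding dT_def using len k by (intro ext sum.cong refl) (simp add: ins_upd)
    have "linear (\<lambda>z. \<Sum>i<Suc m. T (Suc m) ((take i xs @ v # drop i xs)[(if k < i then k else Suc k) := z]))"
    proof (rule linear_compose_sum, intro ballI)
      fix i assume "i \<in> {..<Suc m}"
      then have "i \<le> m" by simp
      then show "linear (\<lambda>z. T (Suc m) ((take i xs @ v # drop i xs)[(if k < i then k else Suc k) := z]))"
        using ml[of "Suc m"] len k unfolding mlin_def by auto
    qed
    then show "linear (\<lambda>z. dT T v m (xs[k:=z]))" by (simp only: eq)
  qed
  show "norm (dT T v m xs) \<le> real (Suc m) * K (Suc m) * norm v * prod_list (map norm xs)"
    if len: "length xs = m" for m xs
  proof -
    have "norm (dT T v m xs) \<le> (\<Sum>i<Suc m. K (Suc m) * prod_list (map norm (take i xs @ v # drop i xs)))"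
      unfolding dT_def using len by (intro sum_norm_le ser_props(2)[OF assms]) auto
    also have "\<dots> = real (Suc m) * K (Suc m) * norm v * prod_list (map norm xs)"
      unfolding prod_ins by (simp add: mult_ac)
    finally show ?thesis .
  qed
  show "0 \<le> real (Suc m) * K (Suc m) * norm v" for m using ser_props(3)[OF assms] by simp
  fix r :: real assume r: "0 \<le> r"
  have s0: "summable (\<lambda>n. K n * (2*(r+1))^n)" by (rule ser_props(4)[OF assms]) (use r in simp)
  define f where "f = (\<lambda>n. K n * (2*(r+1))^n)"
  have "summable f" unfolding f_def by (rule s0)
  then have "summable (\<lambda>n. f (Suc n))" by (simp only: summable_Suc_iff)
  then have "summable (\<lambda>m. K (Suc m) * (2*(r+1))^(Suc m))" by (simp only: f_def)
  then have s1: "summable (\<lambda>m. norm v * (K (Suc m) * (2*(r+1))^(Suc m)))"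
    by (rule summable_mult)
  show "summable (\<lambda>m. real (Suc m) * K (Suc m) * norm v * r^m)"
  proof (rule summable_comparison_test'[OF s1, of 0])
    fix m :: nat
    have K0: "0 \<le> K (Suc m)" using ser_props(3)[OF assms] .
    have a: "real (Suc m) \<le> 2 ^ Suc m" by (rule real_le_two_pow)
    have b: "r^m \<le> (r+1)^Suc m"
    proof -
      have "r^m \<le> (r+1)^m" using r by (intro power_mono) auto
      also have "\<dots> \<le> (r+1)^Suc m" using r by (intro power_increasing) auto
      finally show ?thesis .
    qed
    have ab: "real (Suc m) * r^m \<le> 2 ^ Suc m * (r+1)^Suc m" by (rule mult_mono[OF a b]) (use r in auto)
    have ineq: "(real (Suc m) * r^m) * (K (Suc m) * norm v) \<le> (2 ^ Suc m * (r+1)^Suc m) * (K (Suc m) * norm v)"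
      by (rule mult_right_mono[OF ab]) (use K0 in simp)
    have eq1: "real (Suc m) * K (Suc m) * norm v * r^m = (real (Suc m) * r^m) * (K (Suc m) * norm v)"
      by (simp only: ac_simps)
    have eq2: "(2 ^ Suc m * (r+1)^Suc m) * (K (Suc m) * norm v) = norm v * (K (Suc m) * (2*(r+1))^(Suc m))"
      by (simp only: power_mult_distrib ac_simps)
    have nn: "0 \<le> real (Suc m) * K (Suc m) * norm v * r^m" using K0 r by simp
    have "norm (real (Suc m) * K (Suc m) * norm v * r^m) = real (Suc m) * K (Suc m) * norm v * r^m"
      using nn by simp
    also have "\<dots> = (real (Suc m) * r^m) * (K (Suc m) * norm v)" by (rule eq1)
    also have "\<dots> \<le> (2 ^ Suc m * (r+1)^Suc m) * (K (Suc m) * norm v)" by (rule ineq)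
    also have "\<dots> = norm v * (K (Suc m) * (2*(r+1))^(Suc m))" by (rule eq2)
    finally show "norm (real (Suc m) * K (Suc m) * norm v * r^m) \<le> norm v * (K (Suc m) * (2*(r+1))^(Suc m))" .
  qed
qed

lemma dser_eq_dT:
  assumes "ser T K"
  shows "dser T x v = sfun (dT T v) x"
proof -
  let ?S = "\<lambda>n. \<Sum>i<n. T n ((replicate n x)[i:=v])"
  have "dser T x v = suminf ?S" unfolding dser_def ..
  also have "\<dots> = (\<Sum>n. ?S (Suc n))"
    using suminf_split_head[OF dser_summable[OF assms, of x v]] by simp
  also have "\<dots> = sfun (dT T v) x"
    unfolding sfun_def dT_def
    by (intro suminf_cong sum.cong refl) (metis ins_repl lessThan_iff less_Suc_eq_le)
  finally show ?thesis .
qed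

lemma ser_iter:
  assumes "ser T K"
  shows "\<exists>T' K'. ser T' K' \<and> iter_deriv (sfun T) vs = sfun T'"
proof (induction vs)
  case Nil
  then show ?case using assms by auto
next
  case (Cons v vs)
  then obtain T' K' where s: "ser T' K'" and e: "iter_deriv (sfun T) vs = sfun T'" by blast
  have "iter_deriv (sfun T) (v#vs) = (\<lambda>x. frechet_derivative (sfun T') (at x) v)" by (simp add: e)
  also have "\<dots> = (\<lambda>x. dser T' x v)"
    using frechet_derivative_at[OF ser_has_derivative[OF s]] by metis
  also have "\<dots> = sfun (dT T' v)" using dser_eq_dT[OF s] by auto
  finally show ?case using dT_ser[OF s] by blast
qed

lemma ser_smooth:
  assumes "ser T K"
  shows "smooth_map (sfun T)"
  unfolding smooth_map_def
proof (intro allI)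
  fix vs x
  obtain T' K' where "ser T' K'" "iter_deriv (sfun T) vs = sfun T'" using ser_iter[OF assms] by blast
  then show "iter_deriv (sfun T) vs differentiable (at x)"
    using ser_has_derivative differentiableI by metis
qed




definition cc :: "nat \<Rightarrow> real" where "cc n = (-1)^n / fact (Suc n)"

definition Tpsi :: "('a \<Rightarrow> 'a \<Rightarrow> 'a) \<Rightarrow> 'a \<Rightarrow> nat \<Rightarrow> 'a list \<Rightarrow> 'a::euclidean_space" where
  "Tpsi br y n xs = cc n *\<^sub>R foldr br xs y"

definition psi :: "('a \<Rightarrow> 'a \<Rightarrow> 'a) \<Rightarrow> 'a \<Rightarrow> 'a \<Rightarrow> 'a::euclidean_space" where
  "psi br x y = sfun (Tpsi br y) x"

lemma bil_lin1: "bilinear br \<Longrightarrow> linear (\<lambda>x. br x w)" by (simp add: bilinear_def)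
lemma bil_lin2: "bilinear br \<Longrightarrow> linear (br w)" by (simp add: bilinear_def)

lemma foldr_rep: "foldr br (replicate n x) y = (br x ^^ n) y" by (induction n) (auto simp: funpow.simps(2))

lemma foldr_lin:
  assumes "bilinear br"
  shows "i < length xs \<Longrightarrow> linear (\<lambda>z. foldr br (xs[i:=z]) y)"
proof (induction xs arbitrary: i)
  case Nil then show ?case by simp
next
  case (Cons a xs)
  show ?case
  proof (cases i)
    case 0
    then show ?thesis using bil_lin1[OF assms, of "foldr br xs y"] by simp
  next
    case (Suc j)
    then have "j < length xs" using Cons.prems by simp
    then have "linear (\<lambda>z. foldr br (xs[j:=z]) y)" by (rule Cons.IH)
    then have "linear (br a \<circ> (\<lambda>z. foldr br (xs[j:=z]) y))" by (rule linear_compose) (rule bil_lin2[OF assms])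
    then show ?thesis using Suc by (simp add: o_def)
  qed
qed

lemma foldr_bound:
  assumes "\<forall>a b. norm (br a b) \<le> B * norm a * norm b" "0 \<le> B"
  shows "norm (foldr br xs y) \<le> B ^ length xs * prod_list (map norm xs) * norm y"
proof (induction xs)
  case Nil then show ?case by simp
next
  case (Cons a xs)
  have "norm (foldr br (a#xs) y) = norm (br a (foldr br xs y))" by simp
  also have "\<dots> \<le> B * norm a * norm (foldr br xs y)" using assms(1) by blast
  also have "\<dots> \<le> B * norm a * (B ^ length xs * prod_list (map norm xs) * norm y)"
    by (rule mult_left_mono[OF Cons.IH]) (use assms(2) in simp)
  also have "\<dots> = B ^ length (a#xs) * prod_list (map norm (a#xs)) * norm y" by (simp add: mult_ac)
  finally show ?case .
qed

lemma abs_cc_le: "\<bar>cc n\<bar> \<le> inverse (fact n)"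
proof -
  have "\<bar>cc n\<bar> = 1 / fact (Suc n)" by (simp add: cc_def abs_div)
  also have "\<dots> \<le> 1 / fact n" by (intro divide_left_mono fact_mono) auto
  finally show ?thesis by (simp add: divide_inverse)
qed

lemma psi_ser:
  fixes br :: "'a::euclidean_space \<Rightarrow> 'a \<Rightarrow> 'a"
  assumes "bilinear br"
  shows "\<exists>K. ser (Tpsi br y) K"
proof -
  obtain B where B: "B > 0" "\<forall>a b. norm (br a b) \<le> B * norm a * norm b"
    using bilinear_bounded_pos[OF assms] by blast
  define K where "K n = \<bar>cc n\<bar> * B^n * norm y" for n
  have "ser (Tpsi br y) K" unfolding ser_def
  proof (intro conjI allI impI)
    show "mlin n (Tpsi br y n)" for n
      unfolding mlin_def Tpsi_def
    proof (intro allI impI)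
      fix xs :: "'a list" and i assume "length xs = n" "i < n"
      then have "linear (\<lambda>z. foldr br (xs[i:=z]) y)" using foldr_lin[OF assms] by simp
      then show "linear (\<lambda>z. cc n *\<^sub>R foldr br (xs[i:=z]) y)" by (rule linear_compose_scale_right)
    qed
    show "norm (Tpsi br y n xs) \<le> K n * prod_list (map norm xs)" if "length xs = n" for n xs
    proof -
      have "norm (Tpsi br y n xs) = \<bar>cc n\<bar> * norm (foldr br xs y)" by (simp add: Tpsi_def)
      also have "\<dots> \<le> \<bar>cc n\<bar> * (B ^ length xs * prod_list (map norm xs) * norm y)"
        by (rule mult_left_mono[OF foldr_bound]) (use B in auto)
      also have "\<dots> = K n * prod_list (map norm xs)" using that by (simp add: K_def mult_ac)
      finally show ?thesis .
    qed
    show "0 \<le> K n" for n using B by (simp add: K_def)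
    fix r :: real assume r: "0 \<le> r"
    have se: "summable (\<lambda>n. norm y * (inverse (fact n) * (B*r)^n))"
      by (rule summable_mult) (rule summable_exp)
    show "summable (\<lambda>n. K n * r^n)"
    proof (rule summable_comparison_test'[OF se, of 0])
      fix n :: nat
      have "norm (K n * r^n) = \<bar>cc n\<bar> * ((B*r)^n * norm y)" using B r
        by (simp add: K_def abs_mult power_mult_distrib mult_ac)
      also have "\<dots> \<le> inverse (fact n) * ((B*r)^n * norm y)"
        by (rule mult_right_mono[OF abs_cc_le]) (use B r in simp)
      also have "\<dots> = norm y * (inverse (fact n) * (B*r)^n)" by (simp only: ac_simps)
      finally show "norm (K n * r^n) \<le> norm y * (inverse (fact n) * (B*r)^n)" .
    qed
  qed
  then show ?thesis by blast
qed

lemma psi_eq: "psi br x y = (\<Sum>n. cc n *\<^sub>R (br x ^^ n) y)"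
  unfolding psi_def sfun_def Tpsi_def foldr_rep ..

lemma psi_summable:
  fixes br :: "'a::euclidean_space \<Rightarrow> 'a \<Rightarrow> 'a"
  assumes "bilinear br"
  shows "summable (\<lambda>n. cc n *\<^sub>R (br x ^^ n) y)"
proof -
  obtain K where "ser (Tpsi br y) K" using psi_ser[OF assms] by blast
  from ser_summable[OF this, of x] show ?thesis unfolding Tpsi_def foldr_rep .
qed

lemma funpow_lin:
  fixes br :: "'a::real_vector \<Rightarrow> 'a \<Rightarrow> 'a"
  shows "bilinear br \<Longrightarrow> linear (br x ^^ n)"
proof (induction n)
  case 0 then show ?case by (simp add: linear_iff)
next
  case (Suc n)
  have "linear (br x \<circ> (br x ^^ n))" by (rule linear_compose[OF Suc.IH[OF Suc.prems] bil_lin2[OF Suc.prems]])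
  then show ?case by (simp add: o_def)
qed

lemma psi_linear:
  fixes br :: "'a::euclidean_space \<Rightarrow> 'a \<Rightarrow> 'a"
  assumes bil: "bilinear br"
  shows "linear (psi br x)"
proof (rule linearI)
  fix a b :: 'a
  have "psi br x (a + b) = (\<Sum>n. cc n *\<^sub>R (br x ^^ n) a + cc n *\<^sub>R (br x ^^ n) b)"
    unfolding psi_eq by (simp add: linear_add[OF funpow_lin[OF bil]] scaleR_add_right)
  also have "\<dots> = psi br x a + psi br x b"
    unfolding psi_eq by (rule suminf_add[OF psi_summable[OF bil] psi_summable[OF bil], symmetric])
  finally show "psi br x (a + b) = psi br x a + psi br x b" .
next
  fix c :: real and a :: 'a
  have "psi br x (c *\<^sub>R a) = (\<Sum>n. c *\<^sub>R (cc n *\<^sub>R (br x ^^ n) a))"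
    unfolding psi_eq by (simp add: linear_scale[OF funpow_lin[OF bil]] mult.commute)
  also have "\<dots> = c *\<^sub>R psi br x a"
    unfolding psi_eq by (rule suminf_scaleR_right[OF psi_summable[OF bil], symmetric])
  finally show "psi br x (c *\<^sub>R a) = c *\<^sub>R psi br x a" .
qed

lemma pow_diag:
  assumes "pre_lie br"
  shows "(br x ^^ n) x = (if n = 0 then x else 0)"
proof (induction n)
  case 0 then show ?case by simp
next
  case (Suc n)
  have bil: "bilinear br" using assms by (simp add: pre_lie_def)
  have h: "br x x = - br x x" using assms unfolding pre_lie_def by blast
  then have "br x x + br x x = 0" by (metis add.right_inverse)
  then have "2 *\<^sub>R br x x = 0" by (simp add: scaleR_2)
  then have xx: "br x x = 0" by simp
  have x0: "br x 0 = 0" using linear_0[OF bil_lin2[OF bil]] .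
  show ?case using Suc xx x0 by (cases n) auto
qed

lemma psi_diag:
  assumes "pre_lie br"
  shows "psi br x x = x"
proof -
  have "(\<lambda>n. cc n *\<^sub>R (br x ^^ n) x) = (\<lambda>n. if n = 0 then x else 0)"
    by (rule ext) (simp add: pow_diag[OF assms] cc_def)
  moreover have "(\<lambda>n. if n = 0 then x else 0) sums x"
    using sums_single[of 0 "\<lambda>_. x"] by simp
  ultimately show ?thesis unfolding psi_eq by (simp add: sums_iff)
qed

lemma psi_fun: "(\<lambda>z. psi br z y) = sfun (Tpsi br y)"
  by (rule ext) (simp add: psi_def)

lemma psi_deriv:
  fixes br :: "'a::euclidean_space \<Rightarrow> 'a \<Rightarrow> 'a"
  assumes "bilinear br"
  shows "((\<lambda>z. psi br z y) has_derivative dser (Tpsi br y) x) (at x)"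
proof -
  obtain K where "ser (Tpsi br y) K" using psi_ser[OF assms] by blast
  from ser_has_derivative[OF this] show ?thesis unfolding psi_fun .
qed

lemma psi_smooth:
  fixes br :: "'a::euclidean_space \<Rightarrow> 'a \<Rightarrow> 'a"
  assumes "bilinear br"
  shows "smooth_map (\<lambda>z. psi br z y)"
proof -
  obtain K where "ser (Tpsi br y) K" using psi_ser[OF assms] by blast
  from ser_smooth[OF this] show ?thesis unfolding psi_fun .
qed

lemma repl_upd_same: "(replicate n x)[i:=x] = replicate n x"
  by (induction n arbitrary: i) (auto split: nat.split)

lemma dser_diag:
  "dser (Tpsi br y) x x = (\<Sum>n. (real n * cc n) *\<^sub>R (br x ^^ n) y)"
  unfolding dser_def repl_upd_same Tpsi_def foldr_rep by (simp add: sum_constant_scaleR)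

lemma dser_diag_summable:
  fixes br :: "'a::euclidean_space \<Rightarrow> 'a \<Rightarrow> 'a"
  assumes "bilinear br"
  shows "summable (\<lambda>n. (real n * cc n) *\<^sub>R (br x ^^ n) y)"
proof -
  obtain K where "ser (Tpsi br y) K" using psi_ser[OF assms] by blast
  from dser_summable[OF this, of x x] show ?thesis
    unfolding repl_upd_same Tpsi_def foldr_rep by (simp add: sum_constant_scaleR)
qed

lemma scal_pow:
  fixes br :: "'a::real_vector \<Rightarrow> 'a \<Rightarrow> 'a"
  assumes "bilinear br"
  shows "(br (s *\<^sub>R x) ^^ n) y = s^n *\<^sub>R (br x ^^ n) y"
  by (induction n) (simp_all add: bilinear_lmul[OF assms] bilinear_rmul[OF assms] funpow.simps(2))

lemma key_identity:
  fixes br :: "'a::euclidean_space \<Rightarrow> 'a \<Rightarrow> 'a"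
  assumes bil: "bilinear br"
  shows "(\<Sum>n. ((-1)^n / fact n) *\<^sub>R (br z ^^ n) y) = y - br z (psi br z y)"
proof -
  let ?a = "\<lambda>n. (br z ^^ n) y"
  have S1: "summable (\<lambda>n. cc n *\<^sub>R ?a n)" by (rule psi_summable[OF bil])
  have blz: "bounded_linear (br z)" using bil_lin2[OF bil] by (simp add: linear_conv_bounded_linear)
  have tr: "br z (cc n *\<^sub>R ?a n) = cc n *\<^sub>R ?a (Suc n)" for n
    by (simp add: linear_scale[OF bil_lin2[OF bil]] funpow.simps(2))
  have e1: "br z (psi br z y) = (\<Sum>n. cc n *\<^sub>R ?a (Suc n))"
    unfolding psi_eq bounded_linear.suminf[OF blz S1] tr ..
  have S2: "summable (\<lambda>n. cc n *\<^sub>R ?a (Suc n))"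
    using bounded_linear.summable[OF blz S1] unfolding tr .
  define E where "E n = ((-1)^n / fact n) *\<^sub>R ?a n" for n
  have ES: "E (Suc n) = - (cc n *\<^sub>R ?a (Suc n))" for n
    by (simp add: E_def cc_def)
  have "summable (\<lambda>n. E (Suc n))" unfolding ES by (rule summable_minus[OF S2])
  then have SE: "summable E" by (simp only: summable_Suc_iff)
  have "suminf E = (\<Sum>n. E (Suc n)) + E 0" using suminf_split_head[OF SE] by simp
  also have "(\<Sum>n. E (Suc n)) = - (\<Sum>n. cc n *\<^sub>R ?a (Suc n))"
    unfolding ES by (rule suminf_minus[OF S2])
  also have "E 0 = y" by (simp add: E_def)
  finally show ?thesis unfolding E_def e1 by simp
qed

lemma chain_vec:
  assumes "(g has_derivative G) (at (p t))" "(p has_vector_derivative v) (at t)"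
  shows "((\<lambda>s. g (p s)) has_vector_derivative G v) (at t)"
proof -
  have pd: "(p has_derivative (\<lambda>s. s *\<^sub>R v)) (at t)" using assms(2) by (simp add: has_vector_derivative_def)
  have "((g \<circ> p) has_derivative (G \<circ> (\<lambda>s. s *\<^sub>R v))) (at t)" by (rule diff_chain_at[OF pd assms(1)])
  moreover have "G \<circ> (\<lambda>s. s *\<^sub>R v) = (\<lambda>s. s *\<^sub>R G v)"
    using linear_scale[OF bounded_linear.linear[OF has_derivative_bounded_linear[OF assms(1)]]] by (auto simp: o_def)
  ultimately show ?thesis by (simp add: has_vector_derivative_def o_def)
qed

lemma diag_deriv:
  fixes \<phi> :: "'a::euclidean_space \<Rightarrow> 'a \<Rightarrow> 'a"
  assumes lin: "\<And>z. linear (\<phi> z)" and dif: "\<And>w z. (\<lambda>u. \<phi> u w) differentiable (at z)"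
    and diag: "\<And>z. \<phi> z z = z"
  shows "frechet_derivative (\<lambda>z. \<phi> z x) (at x) y = y - \<phi> x y"
proof -
  define D where "D = frechet_derivative (\<lambda>z. \<phi> z x) (at x)"
  define D2 where "D2 = frechet_derivative (\<lambda>z. \<phi> z y) (at x)"
  define p where "p s = x + s *\<^sub>R y" for s :: real
  have p0: "p 0 = x" by (simp add: p_def)
  have pd: "(p has_vector_derivative y) (at s)" for s
    unfolding p_def has_vector_derivative_def by (auto intro!: derivative_eq_intros)
  have Dd: "((\<lambda>z. \<phi> z x) has_derivative D) (at (p 0))"
    unfolding p0 D_def using dif frechet_derivative_works by blast
  have D2d: "((\<lambda>z. \<phi> z y) has_derivative D2) (at (p 0))"
    unfolding p0 D2_def using dif frechet_derivative_works by blast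
  have f1: "((\<lambda>s. \<phi> (p s) x) has_vector_derivative D y) (at 0)" by (rule chain_vec[OF Dd pd])
  have g2: "((\<lambda>s. \<phi> (p s) y) has_vector_derivative D2 y) (at 0)" by (rule chain_vec[OF D2d pd])
  have f2: "((\<lambda>s. s *\<^sub>R \<phi> (p s) y) has_vector_derivative (0 *\<^sub>R D2 y + 1 *\<^sub>R \<phi> (p 0) y)) (at 0)"
    using has_vector_derivative_scaleR[OF DERIV_ident g2] by simp
  have sumd: "((\<lambda>s. \<phi> (p s) x + s *\<^sub>R \<phi> (p s) y) has_vector_derivative (D y + \<phi> x y)) (at 0)"
    using has_vector_derivative_add[OF f1 f2] p0 by simp
  have eqf: "(\<lambda>s. \<phi> (p s) x + s *\<^sub>R \<phi> (p s) y) = p"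
  proof
    fix s
    have "\<phi> (p s) x + s *\<^sub>R \<phi> (p s) y = \<phi> (p s) (x + s *\<^sub>R y)"
      by (simp add: linear_add[OF lin] linear_scale[OF lin])
    also have "\<dots> = p s" using diag[of "p s"] by (simp add: p_def)
    finally show "\<phi> (p s) x + s *\<^sub>R \<phi> (p s) y = p s" .
  qed
  have "D y + \<phi> x y = y"
    using sumd pd[of 0] unfolding eqf by (rule vector_derivative_unique_at)
  then show ?thesis unfolding D_def by (simp add: algebra_simps)
qed

lemma ray_ode:
  fixes \<phi> :: "'a::euclidean_space \<Rightarrow> 'a \<Rightarrow> 'a" and br :: "'a \<Rightarrow> 'a \<Rightarrow> 'a"
  assumes pl: "pre_lie br" and lin: "\<And>z. linear (\<phi> z)" and dif: "\<And>w z. (\<lambda>u. \<phi> u w) differentiable (at z)"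
    and diag: "\<And>z. \<phi> z z = z" and mc: "\<And>x y. MC br \<phi> x x y = 0"
  shows "((\<lambda>t. t *\<^sub>R \<phi> (t *\<^sub>R x) y) has_vector_derivative (y - br x (t *\<^sub>R \<phi> (t *\<^sub>R x) y))) (at t)"
proof -
  have bil: "bilinear br" using pl by (simp add: pre_lie_def)
  define w where "w = t *\<^sub>R x"
  define Dw where "Dw = frechet_derivative (\<lambda>z. \<phi> z y) (at w)"
  have Dwd: "((\<lambda>z. \<phi> z y) has_derivative Dw) (at ((\<lambda>s. s *\<^sub>R x) t))"
    unfolding Dw_def w_def using dif frechet_derivative_works by blast
  have pd: "((\<lambda>s. s *\<^sub>R x) has_vector_derivative x) (at t)"
    unfolding has_vector_derivative_def by (auto intro!: derivative_eq_intros)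
  have g: "((\<lambda>s. \<phi> (s *\<^sub>R x) y) has_vector_derivative Dw x) (at t)" using chain_vec[OF Dwd pd] .
  have f: "((\<lambda>s. s *\<^sub>R \<phi> (s *\<^sub>R x) y) has_vector_derivative (t *\<^sub>R Dw x + 1 *\<^sub>R \<phi> (t *\<^sub>R x) y)) (at t)"
    using has_vector_derivative_scaleR[OF DERIV_ident g] .
  have linDw: "linear Dw" using has_derivative_bounded_linear[OF Dwd] bounded_linear.linear by blast
  have tD: "t *\<^sub>R Dw x = Dw w" by (simp add: w_def linear_scale[OF linDw])
  have d: "d_form \<phi> w w y = Dw w - (y - \<phi> w y)"
    unfolding d_form_def Dw_def using diag_deriv[OF lin dif diag, of w y] by simp
  have anti: "br (\<phi> w y) w = - br w (\<phi> w y)" using pl unfolding pre_lie_def by blast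
  have b: "form_bracket br \<phi> \<phi> w w y = 2 *\<^sub>R br w (\<phi> w y)"
    unfolding form_bracket_def diag anti by (simp add: scaleR_2)
  have "MC br \<phi> w w y = (Dw w - (y - \<phi> w y)) + br w (\<phi> w y)"
    unfolding MC_def d b by simp
  then have "(Dw w + \<phi> w y) - (y - br w (\<phi> w y)) = 0" using mc[of w y] by (simp add: algebra_simps)
  then have e: "Dw w + \<phi> w y = y - br w (\<phi> w y)" by simp
  have e2: "br w (\<phi> w y) = br x (t *\<^sub>R \<phi> (t *\<^sub>R x) y)"
    by (simp add: w_def bilinear_lmul[OF bil] bilinear_rmul[OF bil])
  have "t *\<^sub>R Dw x + 1 *\<^sub>R \<phi> (t *\<^sub>R x) y = y - br x (t *\<^sub>R \<phi> (t *\<^sub>R x) y)"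
    using e e2 tD by (simp add: w_def)
  then show ?thesis using f by simp
qed

lemma lin_ode_zero:
  fixes h :: "real \<Rightarrow> 'a::euclidean_space"
  assumes L: "linear L" and hd: "\<And>t. (h has_vector_derivative - L (h t)) (at t)" and h0: "h 0 = 0"
  shows "h 1 = 0"
proof -
  obtain C where C: "C > 0" "\<And>w. norm (L w) \<le> C * norm w" using linear_bounded_pos[OF L] by blast
  define k where "k t = exp (-2*C*t) * (h t \<bullet> h t)" for t
  define D where "D t = exp (-2*C*t) * (-2*C) * (h t \<bullet> h t) + exp (-2*C*t) * (h t \<bullet> - L (h t) + - L (h t) \<bullet> h t)" for t
  have kd: "(k has_real_derivative D t) (at t)" for t
  proof -
    have "((\<lambda>t. h t \<bullet> h t) has_vector_derivative (h t \<bullet> - L (h t) + - L (h t) \<bullet> h t)) (at t)"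
      by (rule bounded_bilinear.has_vector_derivative[OF bounded_bilinear_inner hd hd])
    then have i: "((\<lambda>t. h t \<bullet> h t) has_real_derivative (h t \<bullet> - L (h t) + - L (h t) \<bullet> h t)) (at t)"
      by (simp add: has_real_derivative_iff_has_vector_derivative)
    have e: "((\<lambda>t. exp (-2*C*t)) has_real_derivative exp (-2*C*t) * (-2*C)) (at t)"
      by (auto intro!: derivative_eq_intros)
    show ?thesis unfolding k_def D_def using DERIV_mult[OF e i] by (simp add: ac_simps)
  qed
  have Dn: "D t \<le> 0" for t
  proof -
    have cs: "h t \<bullet> - L (h t) \<le> norm (h t) * norm (L (h t))"
      using norm_cauchy_schwarz[of "h t" "- L (h t)"] by simp
    also have "\<dots> \<le> norm (h t) * (C * norm (h t))" by (rule mult_left_mono[OF C(2)]) simp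
    finally have cs2: "h t \<bullet> - L (h t) \<le> C * (h t \<bullet> h t)"
      by (simp add: power2_norm_eq_inner[symmetric] power2_eq_square mult_ac)
    have sym: "- L (h t) \<bullet> h t = h t \<bullet> - L (h t)" by (rule inner_commute)
    have "D t = exp (-2*C*t) * (2 * (h t \<bullet> - L (h t) - C * (h t \<bullet> h t)))"
      unfolding D_def sym by (simp add: algebra_simps)
    also have "\<dots> \<le> 0" using cs2 by (intro mult_nonneg_nonpos) auto
    finally show ?thesis .
  qed
  have "k 1 \<le> k 0"
    by (rule DERIV_nonpos_imp_nonincreasing[of 0 1 k]) (use kd Dn in auto)
  also have "k 0 = 0" by (simp add: k_def h0)
  finally have "exp (-2*C) * (h 1 \<bullet> h 1) \<le> 0" by (simp add: k_def)
  then have "h 1 \<bullet> h 1 \<le> 0" by (simp add: mult_le_0_iff)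
  then show ?thesis using inner_ge_zero[of "h 1"] by (metis antisym inner_eq_zero_iff)
qed

lemma uniq_ray:
  fixes \<phi> \<psi> :: "'a::euclidean_space \<Rightarrow> 'a \<Rightarrow> 'a" and br :: "'a \<Rightarrow> 'a \<Rightarrow> 'a"
  assumes pl: "pre_lie br"
    and lin: "\<And>z. linear (\<phi> z)" and dif: "\<And>w z. (\<lambda>u. \<phi> u w) differentiable (at z)"
    and diag: "\<And>z. \<phi> z z = z" and mc: "\<And>x y. MC br \<phi> x x y = 0"
    and lin2: "\<And>z. linear (\<psi> z)" and dif2: "\<And>w z. (\<lambda>u. \<psi> u w) differentiable (at z)"
    and diag2: "\<And>z. \<psi> z z = z" and mc2: "\<And>x y. MC br \<psi> x x y = 0"
  shows "\<phi> x y = \<psi> x y"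
proof -
  have bil: "bilinear br" using pl by (simp add: pre_lie_def)
  define h where "h t = t *\<^sub>R \<phi> (t *\<^sub>R x) y - t *\<^sub>R \<psi> (t *\<^sub>R x) y" for t
  have hd: "(h has_vector_derivative - br x (h t)) (at t)" for t
  proof -
    have "(h has_vector_derivative (y - br x (t *\<^sub>R \<phi> (t *\<^sub>R x) y)) - (y - br x (t *\<^sub>R \<psi> (t *\<^sub>R x) y))) (at t)"
      unfolding h_def by (rule has_vector_derivative_diff[OF ray_ode[OF pl lin dif diag mc] ray_ode[OF pl lin2 dif2 diag2 mc2]])
    moreover have "(y - br x (t *\<^sub>R \<phi> (t *\<^sub>R x) y)) - (y - br x (t *\<^sub>R \<psi> (t *\<^sub>R x) y)) = - br x (h t)"
      unfolding h_def by (simp add: linear_diff[OF bil_lin2[OF bil]])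
    ultimately show ?thesis by simp
  qed
  have "h 1 = 0" by (rule lin_ode_zero[OF bil_lin2[OF bil] hd]) (simp add: h_def)
  then show ?thesis by (simp add: h_def)
qed

lemma psi_dif:
  fixes br :: "'a::euclidean_space \<Rightarrow> 'a \<Rightarrow> 'a"
  assumes "bilinear br"
  shows "(\<lambda>u. psi br u w) differentiable (at z)"
  using psi_deriv[OF assms] differentiableI by blast

lemma cc_coef: "real n * cc n + cc n = (-1)^n / fact n"
proof -
  have "real n * cc n + cc n = (real n + 1) * ((-1)^n / fact (Suc n))" unfolding cc_def by (simp only: distrib_right mult_1_left)
  also have "\<dots> = (-1)^n / fact n"
  proof -
    have f: "fact (Suc n) = (real n + 1) * (fact n :: real)" by (simp add: fact_Suc algebra_simps)
    have nz: "real n + 1 \<noteq> 0" by linarith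
    show ?thesis by (simp only: f times_divide_eq_right mult_divide_mult_cancel_left[OF nz])
  qed
  finally show ?thesis .
qed

lemma psi_mc:
  fixes br :: "'a::euclidean_space \<Rightarrow> 'a \<Rightarrow> 'a"
  assumes pl: "pre_lie br"
  shows "MC br (psi br) x x y = 0"
proof -
  have bil: "bilinear br" using pl by (simp add: pre_lie_def)
  let ?a = "\<lambda>n. (br x ^^ n) y"
  define p where "p = psi br x y"
  have d1: "frechet_derivative (\<lambda>z. psi br z y) (at x) x = (\<Sum>n. (real n * cc n) *\<^sub>R ?a n)"
    using frechet_derivative_at[OF psi_deriv[OF bil, of y x]] dser_diag by metis
  have d2: "frechet_derivative (\<lambda>z. psi br z x) (at x) y = y - p"
    unfolding p_def by (rule diag_deriv[OF psi_linear[OF bil] psi_dif[OF bil] psi_diag[OF pl]])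
  have anti: "br p x = - br x p" using pl unfolding pre_lie_def by blast
  have b: "form_bracket br (psi br) (psi br) x x y = 2 *\<^sub>R br x p"
    unfolding form_bracket_def psi_diag[OF pl] p_def[symmetric] anti by (simp add: scaleR_2)
  have sum: "(\<Sum>n. (real n * cc n) *\<^sub>R ?a n) + p = y - br x p"
  proof -
    have "(\<Sum>n. (real n * cc n) *\<^sub>R ?a n) + p = (\<Sum>n. (real n * cc n) *\<^sub>R ?a n + cc n *\<^sub>R ?a n)"
      unfolding p_def psi_eq by (rule suminf_add[OF dser_diag_summable[OF bil] psi_summable[OF bil]])
    also have "\<dots> = (\<Sum>n. ((-1)^n / fact n) *\<^sub>R ?a n)"
      by (simp add: scaleR_add_left[symmetric] cc_coef)
    also have "\<dots> = y - br x p" unfolding p_def by (rule key_identity[OF bil])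
    finally show ?thesis .
  qed
  have "MC br (psi br) x x y = (\<Sum>n. (real n * cc n) *\<^sub>R ?a n) - (y - p) + br x p"
    unfolding MC_def d_form_def d1 d2 b by simp
  also have "\<dots> = ((\<Sum>n. (real n * cc n) *\<^sub>R ?a n) + p) - y + br x p" by (simp add: algebra_simps)
  also have "\<dots> = 0" unfolding sum by simp
  finally show ?thesis .
qed

lemma phi0_eq:
  fixes br :: "'a::euclidean_space \<Rightarrow> 'a \<Rightarrow> 'a"
  assumes pl: "pre_lie br"
  shows "phi0 br x y = psi br x y"
proof -
  have bil: "bilinear br" using pl by (simp add: pre_lie_def)
  define G where "G s = s *\<^sub>R psi br (s *\<^sub>R x) y" for s
  have Gd: "(G has_vector_derivative exp_neg_ad br s x y) (at s)" for s
  proof -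
    have "(G has_vector_derivative (y - br x (s *\<^sub>R psi br (s *\<^sub>R x) y))) (at s)"
      unfolding G_def
      by (rule ray_ode[OF pl psi_linear[OF bil] psi_dif[OF bil] psi_diag[OF pl] psi_mc[OF pl]])
    moreover have "y - br x (s *\<^sub>R psi br (s *\<^sub>R x) y) = exp_neg_ad br s x y"
    proof -
      have "y - br x (s *\<^sub>R psi br (s *\<^sub>R x) y) = y - br (s *\<^sub>R x) (psi br (s *\<^sub>R x) y)"
        by (simp add: bilinear_lmul[OF bil] bilinear_rmul[OF bil])
      also have "\<dots> = (\<Sum>n. ((-1)^n / fact n) *\<^sub>R (br (s *\<^sub>R x) ^^ n) y)"
        by (rule key_identity[OF bil, symmetric])
      also have "\<dots> = exp_neg_ad br s x y"
        unfolding exp_neg_ad_def scal_pow[OF bil]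
        by (intro suminf_cong) (simp add: power_minus[of s])
      finally show ?thesis .
    qed
    ultimately show ?thesis by simp
  qed
  have "((\<lambda>s. exp_neg_ad br s x y) has_integral (G 1 - G 0)) {0..1}"
    by (rule fundamental_theorem_of_calculus) (auto intro: has_vector_derivative_at_within[OF Gd])
  then have "integral {0..1} (\<lambda>s. exp_neg_ad br s x y) = G 1 - G 0" by (rule integral_unique)
  then show ?thesis by (simp add: phi0_def G_def)
qed

lemma pow_bound:
  fixes br :: "'a::real_normed_vector \<Rightarrow> 'a \<Rightarrow> 'a"
  assumes "\<forall>a b. norm (br a b) \<le> B * norm a * norm b" "0 \<le> B"
  shows "norm ((br x ^^ n) y) \<le> (B * norm x)^n * norm y"
  using foldr_bound[OF assms, of "replicate n x" y] by (simp add: foldr_rep power_mult_distrib)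

lemma psi_near_id:
  fixes br :: "'a::euclidean_space \<Rightarrow> 'a \<Rightarrow> 'a"
  assumes bil: "bilinear br" and B: "\<forall>a b. norm (br a b) \<le> B * norm a * norm b" "0 \<le> B"
    and small: "B * norm x \<le> 1/3"
  shows "norm (psi br x y - y) \<le> norm y / 2"
proof -
  let ?t = "\<lambda>n. cc n *\<^sub>R (br x ^^ n) y"
  have S: "summable ?t" by (rule psi_summable[OF bil])
  have "psi br x y - y = (\<Sum>n. ?t (Suc n))" using suminf_split_head[OF S] by (simp add: psi_eq cc_def)
  also have "norm \<dots> \<le> (\<Sum>n. (1/3)^n * (norm y / 3))"
  proof (rule sum_bound_helper(2))
    show "norm (?t (Suc n)) \<le> (1/3)^n * (norm y / 3)" for n
    proof -
      have "inverse (fact (Suc n) :: real) \<le> 1" by (rule inverse_le_1_iff[THEN iffD2]) (rule disjI2, rule fact_ge_1)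
      then have c1: "\<bar>cc (Suc n)\<bar> \<le> 1" using abs_cc_le[of "Suc n"] by linarith
      have bx: "0 \<le> B * norm x" using B by simp
      have "norm (?t (Suc n)) = \<bar>cc (Suc n)\<bar> * norm ((br x ^^ Suc n) y)" by simp
      also have "\<dots> \<le> 1 * ((B * norm x)^Suc n * norm y)"
        by (rule mult_mono[OF c1 pow_bound[OF B]]) auto
      also have "\<dots> = (B * norm x)^Suc n * norm y" by simp
      also have "\<dots> \<le> (1/3)^Suc n * norm y"
        by (rule mult_right_mono[OF power_mono[OF small bx]]) simp
      also have "\<dots> = (1/3)^n * (norm y / 3)" by simp
      finally show ?thesis .
    qed
    show "summable (\<lambda>n. (1/3::real)^n * (norm y / 3))"
      by (rule summable_mult2[OF summable_geometric]) simp
  qed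
  also have "(\<Sum>n. (1/3::real)^n * (norm y / 3)) = (\<Sum>n. (1/3::real)^n) * (norm y / 3)"
    by (rule suminf_mult2[OF summable_geometric, symmetric]) simp
  also have "\<dots> = norm y / 2" by (subst suminf_geometric) simp_all
  finally show ?thesis .
qed

lemma psi_bij:
  fixes br :: "'a::euclidean_space \<Rightarrow> 'a \<Rightarrow> 'a"
  assumes bil: "bilinear br" and B: "\<forall>a b. norm (br a b) \<le> B * norm a * norm b" "0 \<le> B"
    and small: "B * norm x \<le> 1/3"
  shows "bij (psi br x)"
proof -
  have lin: "linear (psi br x)" by (rule psi_linear[OF bil])
  have inj: "inj (psi br x)"
    unfolding linear_injective_0[OF lin]
  proof (intro allI impI)
    fix y assume "psi br x y = 0"
    then have "norm y \<le> norm y / 2" using psi_near_id[OF bil B small, of y] by simp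
    then show "y = 0" by simp
  qed
  have "surj (psi br x)" by (rule linear_inj_imp_surj[OF lin inj])
  then show ?thesis using inj by (simp add: bij_def)
qed


theorem theorem1p1:
  fixes br :: "'a::euclidean_space \<Rightarrow> 'a \<Rightarrow> 'a"
  assumes "pre_lie br"
  shows "(\<exists>\<phi>. one_form \<phi> \<and> (\<forall>x y. MC br \<phi> x x y = 0) \<and> bij (\<phi> 0)
            \<and> (\<exists>U. open U \<and> 0 \<in> U \<and> (\<forall>x\<in>U. bij (\<phi> x))))
       \<and> (one_form (phi0 br) \<and> (\<forall>x y. MC br (phi0 br) x x y = 0) \<and> (\<forall>x. phi0 br x x = x))
       \<and> (\<forall>\<phi>. one_form \<phi> \<and> (\<forall>x y. MC br \<phi> x x y = 0) \<and> (\<forall>x. \<phi> x x = x)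
              \<longrightarrow> \<phi> = phi0 br)"
proof -
  have bil: "bilinear br" using assms by (simp add: pre_lie_def)
  have phi_eq: "phi0 br = psi br" by (intro ext phi0_eq[OF assms])
  have of: "one_form (psi br)" unfolding one_form_def using psi_linear[OF bil] psi_smooth[OF bil] by blast
  have mc: "\<forall>x y. MC br (psi br) x x y = 0" using psi_mc[OF assms] by blast
  have dg: "\<forall>x. psi br x x = x" using psi_diag[OF assms] by blast
  obtain B where B: "B > 0" "\<forall>a b. norm (br a b) \<le> B * norm a * norm b"
    using bilinear_bounded_pos[OF bil] by blast
  define U where "U = ball (0::'a) (1/(3*B))"
  have U: "open U" "0 \<in> U" using B by (auto simp: U_def)
  have bijU: "\<forall>x\<in>U. bij (psi br x)"
  proof
    fix x assume "x \<in> U"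
    then have nx: "norm x < 1/(3*B)" by (simp add: U_def)
    have "B * norm x \<le> B * (1/(3*B))" using nx B by (intro mult_left_mono) auto
    also have "\<dots> = 1/3" using B by simp
    finally have "B * norm x \<le> 1/3" .
    then show "bij (psi br x)" by (rule psi_bij[OF bil B(2) less_imp_le[OF B(1)]])
  qed
  have bij0: "bij (psi br 0)" using bijU U(2) by blast
  have uniq: "\<forall>\<phi>. one_form \<phi> \<and> (\<forall>x y. MC br \<phi> x x y = 0) \<and> (\<forall>x. \<phi> x x = x) \<longrightarrow> \<phi> = phi0 br"
  proof (intro allI impI)
    fix \<phi> :: "'a \<Rightarrow> 'a \<Rightarrow> 'a"
    assume h: "one_form \<phi> \<and> (\<forall>x y. MC br \<phi> x x y = 0) \<and> (\<forall>x. \<phi> x x = x)"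
    have lin: "\<And>z. linear (\<phi> z)" using h unfolding one_form_def by blast
    have dif: "\<And>w z. (\<lambda>u. \<phi> u w) differentiable (at z)"
    proof -
      fix w z
      have "smooth_map (\<lambda>u. \<phi> u w)" using h unfolding one_form_def by blast
      then have "iter_deriv (\<lambda>u. \<phi> u w) [] differentiable (at z)" unfolding smooth_map_def by blast
      then show "(\<lambda>u. \<phi> u w) differentiable (at z)" by simp
    qed
    have diag: "\<And>z. \<phi> z z = z" using h by blast
    have mcp: "\<And>x y. MC br \<phi> x x y = 0" using h by blast
    show "\<phi> = phi0 br" unfolding phi_eq
      by (intro ext uniq_ray[OF assms lin dif diag mcp psi_linear[OF bil] psi_dif[OF bil] psi_diag[OF assms] psi_mc[OF assms]])
  qed
  show ?thesis
  proof (intro conjI)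
    show "\<exists>\<phi>. one_form \<phi> \<and> (\<forall>x y. MC br \<phi> x x y = 0) \<and> bij (\<phi> 0)
            \<and> (\<exists>U. open U \<and> 0 \<in> U \<and> (\<forall>x\<in>U. bij (\<phi> x)))"
      using of mc bij0 U bijU by blast
    show "one_form (phi0 br)" using of phi_eq by simp
    show "\<forall>x y. MC br (phi0 br) x x y = 0" using mc phi_eq by simp
    show "\<forall>x. phi0 br x x = x" using dg phi_eq by simp
    show "\<forall>\<phi>. one_form \<phi> \<and> (\<forall>x y. MC br \<phi> x x y = 0) \<and> (\<forall>x. \<phi> x x = x) \<longrightarrow> \<phi> = phi0 br"
      by (rule uniq)
  qed
qed

end
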